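(* Consider simultaneous two-player weighted congestion games with affine costs and uniform cost functions, where the player weights $w_1,w_2\ge 0$ (with $w_1+w_2>0$) are arbitrary. The price of anarchy (supremum over all weights and all instances, with respect to pure Nash equilibria) is equal to $1+2/\sqrt{3}\approx 2.155$, both for general congestion games and for network routing games. Moreover, for fixed weights the price of anarchy equals $1+2/\sqrt{3}$ when $w_1/w_2 = 1+\sqrt{3}$ and when $w_2/w_1 = 1+\sqrt{3}$.
   Context: A weighted two-player congestion game with affine costs consists of a finite set $R$ of resources, coefficients $\alpha_r,\beta_r \geq 0$ for each $r\in R$, two players $i=1,2$ with weights $w_i\ge 0$, and for each player $i$ a nonempty finite set $\mathcal{A}_i \subseteq 2^R$ of actions. For an action profile $A=(A_1,A_2)$ the load of $r$ is $x_r(A)=\sum_{j:\, r\in A_j} w_j$. With uniform costs, player $i$ pays $C_i(A)=\sum_{r\in A_i}(\alpha_r+\beta_r x_r(A))$. The social cost is $C(A)=C_1(A)+C_2(A)$. In a network routing game, $R$ is the arc set of a directed graph, player $i$ has a source $s_i$ and sink $t_i$, and $\mathcal{A}_i$ is the set of arc sets of directed $s_i$–$t_i$ paths. A profile $(A_1^*,A_2^* )$ is a (pure) Nash equilibrium if no player can lower her cost by unilaterally changing her action. The price of anarchy of an instance is the maximum over Nash equilibria $A$ of $C(A)/\min_{A'} C(A')$; the price of anarchy of a class is the supremum over all instances in the class (with positive optimal social cost). *)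

theory Defs
  imports Complex_Main
begin

text \<open>Resources are natural numbers (an infinite supply, so that every finite
  instance can be represented).\<close>

definition load :: "real \<Rightarrow> real \<Rightarrow> nat set \<Rightarrow> nat set \<Rightarrow> nat \<Rightarrow> real" where
  "load w1 w2 S1 S2 r = (if r \<in> S1 then w1 else 0) + (if r \<in> S2 then w2 else 0)"

definition pcost :: "(nat \<Rightarrow> real) \<Rightarrow> (nat \<Rightarrow> real) \<Rightarrow> real \<Rightarrow> real \<Rightarrow>
    nat set \<Rightarrow> nat set \<Rightarrow> nat set \<Rightarrow> real" where
  "pcost \<alpha> \<beta> w1 w2 S1 S2 S = (\<Sum>r\<in>S. \<alpha> r + \<beta> r * load w1 w2 S1 S2 r)"

definition cost1 :: "(nat \<Rightarrow> real) \<Rightarrow> (nat \<Rightarrow> real) \<Rightarrow> real \<Rightarrow> real \<Rightarrow>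
    nat set \<Rightarrow> nat set \<Rightarrow> real" where
  "cost1 \<alpha> \<beta> w1 w2 S1 S2 = pcost \<alpha> \<beta> w1 w2 S1 S2 S1"

definition cost2 :: "(nat \<Rightarrow> real) \<Rightarrow> (nat \<Rightarrow> real) \<Rightarrow> real \<Rightarrow> real \<Rightarrow>
    nat set \<Rightarrow> nat set \<Rightarrow> real" where
  "cost2 \<alpha> \<beta> w1 w2 S1 S2 = pcost \<alpha> \<beta> w1 w2 S1 S2 S2"

definition social_cost :: "(nat \<Rightarrow> real) \<Rightarrow> (nat \<Rightarrow> real) \<Rightarrow> real \<Rightarrow> real \<Rightarrow>
    nat set \<Rightarrow> nat set \<Rightarrow> real" where
  "social_cost \<alpha> \<beta> w1 w2 S1 S2 = cost1 \<alpha> \<beta> w1 w2 S1 S2 + cost2 \<alpha> \<beta> w1 w2 S1 S2"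

definition valid_game :: "nat set \<Rightarrow> (nat \<Rightarrow> real) \<Rightarrow> (nat \<Rightarrow> real) \<Rightarrow>
    nat set set \<Rightarrow> nat set set \<Rightarrow> bool" where
  "valid_game R \<alpha> \<beta> A1 A2 \<longleftrightarrow> finite R \<and> (\<forall>r\<in>R. 0 \<le> \<alpha> r \<and> 0 \<le> \<beta> r) \<and>
     A1 \<noteq> {} \<and> A2 \<noteq> {} \<and> A1 \<subseteq> Pow R \<and> A2 \<subseteq> Pow R"

definition is_NE :: "nat set set \<Rightarrow> nat set set \<Rightarrow> (nat \<Rightarrow> real) \<Rightarrow> (nat \<Rightarrow> real) \<Rightarrow>
    real \<Rightarrow> real \<Rightarrow> nat set \<Rightarrow> nat set \<Rightarrow> bool" where
  "is_NE A1 A2 \<alpha> \<beta> w1 w2 S1 S2 \<longleftrightarrow> S1 \<in> A1 \<and> S2 \<in> A2 \<and>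
     (\<forall>S\<in>A1. cost1 \<alpha> \<beta> w1 w2 S1 S2 \<le> cost1 \<alpha> \<beta> w1 w2 S S2) \<and>
     (\<forall>S\<in>A2. cost2 \<alpha> \<beta> w1 w2 S1 S2 \<le> cost2 \<alpha> \<beta> w1 w2 S1 S)"

definition opt_cost :: "nat set set \<Rightarrow> nat set set \<Rightarrow> (nat \<Rightarrow> real) \<Rightarrow> (nat \<Rightarrow> real) \<Rightarrow>
    real \<Rightarrow> real \<Rightarrow> real" where
  "opt_cost A1 A2 \<alpha> \<beta> w1 w2 =
     Min ((\<lambda>(S1, S2). social_cost \<alpha> \<beta> w1 w2 S1 S2) ` (A1 \<times> A2))"

text \<open>Network routing games: resources are arcs (natural numbers) of a
  finite directed multigraph with arc set E, tail function src and head
  function dst.\<close>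
fun is_walk :: "(nat \<Rightarrow> nat) \<Rightarrow> (nat \<Rightarrow> nat) \<Rightarrow> nat \<Rightarrow> nat \<Rightarrow> nat list \<Rightarrow> bool" where
  "is_walk src dst s t [] = (s = t)"
| "is_walk src dst s t (e # es) = (src e = s \<and> is_walk src dst (dst e) t es)"

definition path_arcsets :: "nat set \<Rightarrow> (nat \<Rightarrow> nat) \<Rightarrow> (nat \<Rightarrow> nat) \<Rightarrow> nat \<Rightarrow> nat \<Rightarrow> nat set set" where
  "path_arcsets E src dst s t =
     {set es | es. set es \<subseteq> E \<and> is_walk src dst s t es \<and> distinct (s # map dst es)}"

definition network_game :: "nat set \<Rightarrow> (nat \<Rightarrow> real) \<Rightarrow> (nat \<Rightarrow> real) \<Rightarrow>
    nat set set \<Rightarrow> nat set set \<Rightarrow> bool" where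
  "network_game R \<alpha> \<beta> A1 A2 \<longleftrightarrow> valid_game R \<alpha> \<beta> A1 A2 \<and>
     (\<exists>src dst s1 t1 s2 t2. A1 = path_arcsets R src dst s1 t1 \<and> A2 = path_arcsets R src dst s2 t2)"

definition poa_ratios :: "(nat set \<Rightarrow> (nat \<Rightarrow> real) \<Rightarrow> (nat \<Rightarrow> real) \<Rightarrow>
    nat set set \<Rightarrow> nat set set \<Rightarrow> bool) \<Rightarrow> real \<Rightarrow> real \<Rightarrow> real set" where
  "poa_ratios cls w1 w2 =
     {social_cost \<alpha> \<beta> w1 w2 S1 S2 / opt_cost A1 A2 \<alpha> \<beta> w1 w2 | R \<alpha> \<beta> A1 A2 S1 S2.
        cls R \<alpha> \<beta> A1 A2 \<and> 0 < opt_cost A1 A2 \<alpha> \<beta> w1 w2 \<and> is_NE A1 A2 \<alpha> \<beta> w1 w2 S1 S2}"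

definition poa_fixed :: "(nat set \<Rightarrow> (nat \<Rightarrow> real) \<Rightarrow> (nat \<Rightarrow> real) \<Rightarrow>
    nat set set \<Rightarrow> nat set set \<Rightarrow> bool) \<Rightarrow> real \<Rightarrow> real \<Rightarrow> real" where
  "poa_fixed cls w1 w2 = Sup (poa_ratios cls w1 w2)"

definition poa_all :: "(nat set \<Rightarrow> (nat \<Rightarrow> real) \<Rightarrow> (nat \<Rightarrow> real) \<Rightarrow>
    nat set set \<Rightarrow> nat set set \<Rightarrow> bool) \<Rightarrow> real" where
  "poa_all cls = Sup (\<Union>{poa_ratios cls w1 w2 | w1 w2. 0 \<le> w1 \<and> 0 \<le> w2 \<and> 0 < w1 + w2})"

end

theory Submission imports Defs begin
definition ind :: "bool \<Rightarrow> real" where "ind b = (if b then 1 else 0)"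

definition termL :: "real \<Rightarrow> real \<Rightarrow> real \<Rightarrow> real \<Rightarrow> bool \<Rightarrow> bool \<Rightarrow> bool \<Rightarrow> bool \<Rightarrow> real" where
 "termL w1 w2 a b p1 p2 q1 q2 = (let D = w1*w1+w1*w2+w2*w2; A = w1*(w2+2*w1); P = (w1+w2)*(2*w1+w2) in
   D*(ind p1*(a + b*(w1*ind p1 + w2*ind p2)) + ind p2*(a+b*(w1*ind p1+w2*ind p2)))
  + A*(ind q1*(a + b*(w1*ind q1 + w2*ind p2)) - ind p1*(a+b*(w1*ind p1 + w2*ind p2)))
  + D*(ind q2*(a+b*(w1*ind p1 + w2*ind q2)) - ind p2*(a+b*(w1*ind p1 + w2*ind p2)))
  - P*(ind q1*(a+b*(w1*ind q1 + w2*ind q2)) + ind q2*(a+b*(w1*ind q1 + w2*ind q2))))"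

lemma termL_nonpos: assumes "0 \<le> w2" "w2 \<le> w1" "0 \<le> a" "0 \<le> b"
  shows "termL w1 w2 a b p1 p2 q1 q2 \<le> 0"
proof -
  obtain d where d: "d \<ge> 0" "w1 = w2 + d" using assms by (intro that[of "w1 - w2"]) auto
  show ?thesis using d assms
    by (cases p1; cases p2; cases q1; cases q2; simp add: termL_def ind_def Let_def algebra_simps; smt (verit) mult_nonneg_nonneg)
qed

lemma pcost_R:
  assumes "finite R" "Z \<subseteq> R"
  shows "pcost \<alpha> \<beta> w1 w2 X Y Z =
     (\<Sum>r\<in>R. ind (r\<in>Z) * (\<alpha> r + \<beta> r * (w1 * ind (r\<in>X) + w2 * ind (r\<in>Y))))"
proof -
  have "pcost \<alpha> \<beta> w1 w2 X Y Z = (\<Sum>r\<in>R \<inter> Z. \<alpha> r + \<beta> r * (w1 * ind (r\<in>X) + w2 * ind (r\<in>Y)))"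
    using assms by (auto simp: pcost_def load_def ind_def Int_absorb1 Int_commute intro!: sum.cong)
  also have "\<dots> = (\<Sum>r\<in>R. if r \<in> Z then \<alpha> r + \<beta> r * (w1 * ind (r\<in>X) + w2 * ind (r\<in>Y)) else 0)"
    using assms(1) by (rule sum.inter_restrict)
  also have "\<dots> = (\<Sum>r\<in>R. ind (r\<in>Z) * (\<alpha> r + \<beta> r * (w1 * ind (r\<in>X) + w2 * ind (r\<in>Y))))"
    by (rule sum.cong) (auto simp: ind_def)
  finally show ?thesis .
qed

lemma ub_main:
  assumes vg: "valid_game R \<alpha> \<beta> A1 A2" and ne: "is_NE A1 A2 \<alpha> \<beta> w1 w2 S1 S2"
    and o: "O1 \<in> A1" "O2 \<in> A2" and w: "0 \<le> w2" "w2 \<le> w1"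
  shows "(w1*w1+w1*w2+w2*w2) * social_cost \<alpha> \<beta> w1 w2 S1 S2
     \<le> ((w1+w2)*(2*w1+w2)) * social_cost \<alpha> \<beta> w1 w2 O1 O2"
proof -
  define D where "D = w1*w1+w1*w2+w2*w2"
  define A where "A = w1*(w2+2*w1)"
  define P where "P = (w1+w2)*(2*w1+w2)"
  have fin: "finite R" and ab: "\<And>r. r \<in> R \<Longrightarrow> 0 \<le> \<alpha> r \<and> 0 \<le> \<beta> r"
    and sub: "S1 \<subseteq> R" "S2 \<subseteq> R" "O1 \<subseteq> R" "O2 \<subseteq> R"
    using vg ne o unfolding valid_game_def is_NE_def by auto
  have ne1: "cost1 \<alpha> \<beta> w1 w2 S1 S2 \<le> cost1 \<alpha> \<beta> w1 w2 O1 S2"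
    and ne2: "cost2 \<alpha> \<beta> w1 w2 S1 S2 \<le> cost2 \<alpha> \<beta> w1 w2 S1 O2"
    using ne o unfolding is_NE_def by auto
  have A0: "0 \<le> A" "0 \<le> D" using w unfolding A_def D_def by auto
  have "D * social_cost \<alpha> \<beta> w1 w2 S1 S2 + A * (cost1 \<alpha> \<beta> w1 w2 O1 S2 - cost1 \<alpha> \<beta> w1 w2 S1 S2)
        + D * (cost2 \<alpha> \<beta> w1 w2 S1 O2 - cost2 \<alpha> \<beta> w1 w2 S1 S2) - P * social_cost \<alpha> \<beta> w1 w2 O1 O2
      = (\<Sum>r\<in>R. termL w1 w2 (\<alpha> r) (\<beta> r) (r\<in>S1) (r\<in>S2) (r\<in>O1) (r\<in>O2))"
    unfolding social_cost_def cost1_def cost2_def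
    using fin sub
    by (simp add: pcost_R[OF fin] termL_def Let_def D_def A_def P_def sum_distrib_left
        sum_subtractf[symmetric] sum.distrib[symmetric] algebra_simps)
  also have "\<dots> \<le> 0" using ab w by (intro sum_nonpos termL_nonpos) auto
  finally have "D * social_cost \<alpha> \<beta> w1 w2 S1 S2 + A * (cost1 \<alpha> \<beta> w1 w2 O1 S2 - cost1 \<alpha> \<beta> w1 w2 S1 S2)
        + D * (cost2 \<alpha> \<beta> w1 w2 S1 O2 - cost2 \<alpha> \<beta> w1 w2 S1 S2) \<le> P * social_cost \<alpha> \<beta> w1 w2 O1 O2"
    by simp
  moreover have "0 \<le> A * (cost1 \<alpha> \<beta> w1 w2 O1 S2 - cost1 \<alpha> \<beta> w1 w2 S1 S2)"
    using A0 ne1 by simp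
  moreover have "0 \<le> D * (cost2 \<alpha> \<beta> w1 w2 S1 O2 - cost2 \<alpha> \<beta> w1 w2 S1 S2)"
    using A0 ne2 by simp
  ultimately show ?thesis unfolding D_def P_def by linarith
qed

lemma rho_bound:
  shows "(w1+w2)*(2*w1+w2) \<le> (1 + 2 / sqrt 3) * (w1*w1+w1*w2+w2*w2)"
proof -
  define s where "s = sqrt 3"
  have s2: "s * s = 3" unfolding s_def by simp
  have sp: "0 < s" unfolding s_def by simp
  have s2': "\<And>x. s * (s * x) = 3 * x" using s2 by (simp add: mult.assoc[symmetric])
  have sl: "s < 2"
  proof -
    have "sqrt 3 < sqrt 4" by (simp only: real_sqrt_less_iff)
    then show ?thesis unfolding s_def by simp
  qed
  have "s * ((1 + 2 / s) * (w1*w1+w1*w2+w2*w2) - (w1+w2)*(2*w1+w2))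
      = (2 - s) * (w1 - (1+s)*w2)^2"
    using sp s2 by (simp add: field_simps power2_eq_square) (simp add: algebra_simps s2')
  also have "\<dots> \<ge> 0" using sl by simp
  finally have "0 \<le> s * ((1 + 2 / s) * (w1*w1+w1*w2+w2*w2) - (w1+w2)*(2*w1+w2))" .
  then have "0 \<le> (1 + 2 / s) * (w1*w1+w1*w2+w2*w2) - (w1+w2)*(2*w1+w2)"
    using sp by (simp add: zero_le_mult_iff)
  then show ?thesis unfolding s_def by simp
qed

lemma opt_attained:
  assumes "valid_game R \<alpha> \<beta> A1 A2"
  shows "\<exists>O1\<in>A1. \<exists>O2\<in>A2. opt_cost A1 A2 \<alpha> \<beta> w1 w2 = social_cost \<alpha> \<beta> w1 w2 O1 O2"
proof -
  have "finite A1" "finite A2" using assms unfolding valid_game_def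
    by (meson finite_Pow_iff finite_subset)+
  moreover have "A1 \<times> A2 \<noteq> {}" using assms unfolding valid_game_def by auto
  ultimately have "opt_cost A1 A2 \<alpha> \<beta> w1 w2 \<in> (\<lambda>(S1, S2). social_cost \<alpha> \<beta> w1 w2 S1 S2) ` (A1 \<times> A2)"
    unfolding opt_cost_def by (intro Min_in) auto
  then show ?thesis by auto
qed

lemma ratio_le:
  assumes vg: "valid_game R \<alpha> \<beta> A1 A2" and ne: "is_NE A1 A2 \<alpha> \<beta> w1 w2 S1 S2"
    and w: "0 \<le> w2" "w2 \<le> w1" "0 < w1" and op: "0 < opt_cost A1 A2 \<alpha> \<beta> w1 w2"
  shows "social_cost \<alpha> \<beta> w1 w2 S1 S2 / opt_cost A1 A2 \<alpha> \<beta> w1 w2 \<le> 1 + 2 / sqrt 3"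
proof -
  obtain O1 O2 where o: "O1 \<in> A1" "O2 \<in> A2" and oe: "opt_cost A1 A2 \<alpha> \<beta> w1 w2 = social_cost \<alpha> \<beta> w1 w2 O1 O2"
    using opt_attained[OF vg] by blast
  define D where "D = w1*w1+w1*w2+w2*w2"
  have Dp: "0 < D" using w unfolding D_def by (simp add: add_pos_nonneg)
  have "D * social_cost \<alpha> \<beta> w1 w2 S1 S2 \<le> ((w1+w2)*(2*w1+w2)) * social_cost \<alpha> \<beta> w1 w2 O1 O2"
    using ub_main[OF vg ne o w(1,2)] unfolding D_def .
  also have "\<dots> \<le> ((1 + 2 / sqrt 3) * D) * social_cost \<alpha> \<beta> w1 w2 O1 O2"
    using rho_bound[of w1 w2] op oe unfolding D_def by (intro mult_right_mono) auto
  finally have "social_cost \<alpha> \<beta> w1 w2 S1 S2 \<le> (1 + 2 / sqrt 3) * social_cost \<alpha> \<beta> w1 w2 O1 O2"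
    using Dp by (simp add: mult.assoc mult.left_commute[of D])
  then show ?thesis using op oe by (simp add: divide_le_eq)
qed

lemma load_swap: "load w2 w1 S2 S1 = load w1 w2 S1 S2"
  by (rule ext) (simp add: load_def)

lemma pcost_swap: "pcost \<alpha> \<beta> w2 w1 S2 S1 = pcost \<alpha> \<beta> w1 w2 S1 S2"
  unfolding pcost_def load_def by (intro ext sum.cong refl) (simp add: algebra_simps)

lemma sc_swap: "social_cost \<alpha> \<beta> w2 w1 S2 S1 = social_cost \<alpha> \<beta> w1 w2 S1 S2"
  by (simp add: social_cost_def cost1_def cost2_def pcost_swap)

lemma ne_swap: "is_NE A2 A1 \<alpha> \<beta> w2 w1 S2 S1 = is_NE A1 A2 \<alpha> \<beta> w1 w2 S1 S2"
  by (auto simp: is_NE_def cost1_def cost2_def pcost_swap)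

lemma opt_swap: "opt_cost A2 A1 \<alpha> \<beta> w2 w1 = opt_cost A1 A2 \<alpha> \<beta> w1 w2"
proof -
  have "(\<lambda>(S1, S2). social_cost \<alpha> \<beta> w2 w1 S1 S2) ` (A2 \<times> A1)
      = (\<lambda>(S1, S2). social_cost \<alpha> \<beta> w1 w2 S1 S2) ` (A1 \<times> A2)"
  proof (intro equalityI subsetI)
    fix x assume "x \<in> (\<lambda>(S1, S2). social_cost \<alpha> \<beta> w2 w1 S1 S2) ` (A2 \<times> A1)"
    then obtain a b where "a \<in> A2" "b \<in> A1" "x = social_cost \<alpha> \<beta> w2 w1 a b" by auto
    then show "x \<in> (\<lambda>(S1, S2). social_cost \<alpha> \<beta> w1 w2 S1 S2) ` (A1 \<times> A2)"
      by (auto simp: sc_swap intro!: image_eqI[of _ _ "(b,a)"])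
  next
    fix x assume "x \<in> (\<lambda>(S1, S2). social_cost \<alpha> \<beta> w1 w2 S1 S2) ` (A1 \<times> A2)"
    then obtain a b where "a \<in> A1" "b \<in> A2" "x = social_cost \<alpha> \<beta> w1 w2 a b" by auto
    then show "x \<in> (\<lambda>(S1, S2). social_cost \<alpha> \<beta> w2 w1 S1 S2) ` (A2 \<times> A1)"
      by (auto simp: sc_swap[symmetric] intro!: image_eqI[of _ _ "(b,a)"])
  qed
  then show ?thesis unfolding opt_cost_def by simp
qed

lemma ratios_swap_sub:
  assumes "\<And>R \<alpha> \<beta> A1 A2. cls R \<alpha> \<beta> A1 A2 \<Longrightarrow> cls R \<alpha> \<beta> A2 A1"
  shows "poa_ratios cls w1 w2 \<subseteq> poa_ratios cls w2 w1"
proof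
  fix x assume "x \<in> poa_ratios cls w1 w2"
  then obtain R \<alpha> \<beta> A1 A2 S1 S2 where x: "x = social_cost \<alpha> \<beta> w1 w2 S1 S2 / opt_cost A1 A2 \<alpha> \<beta> w1 w2"
    and c: "cls R \<alpha> \<beta> A1 A2" "0 < opt_cost A1 A2 \<alpha> \<beta> w1 w2" "is_NE A1 A2 \<alpha> \<beta> w1 w2 S1 S2"
    unfolding poa_ratios_def by blast
  have "x = social_cost \<alpha> \<beta> w2 w1 S2 S1 / opt_cost A2 A1 \<alpha> \<beta> w2 w1"
    using x by (simp add: sc_swap opt_swap)
  moreover have "cls R \<alpha> \<beta> A2 A1" "0 < opt_cost A2 A1 \<alpha> \<beta> w2 w1" "is_NE A2 A1 \<alpha> \<beta> w2 w1 S2 S1"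
    using c assms[OF c(1)] by (simp_all add: opt_swap ne_swap)
  ultimately show "x \<in> poa_ratios cls w2 w1" unfolding poa_ratios_def by blast
qed

lemma valid_sym: "valid_game R \<alpha> \<beta> A1 A2 \<Longrightarrow> valid_game R \<alpha> \<beta> A2 A1"
  by (auto simp: valid_game_def)

lemma network_sym: "network_game R \<alpha> \<beta> A1 A2 \<Longrightarrow> network_game R \<alpha> \<beta> A2 A1"
  unfolding network_game_def using valid_sym by blast

lemma ratios_swap_valid: "poa_ratios valid_game w1 w2 = poa_ratios valid_game w2 w1"
  by (intro equalityI; rule ratios_swap_sub; erule valid_sym)

lemma ratios_swap_network: "poa_ratios network_game w1 w2 = poa_ratios network_game w2 w1"
  by (intro equalityI; rule ratios_swap_sub; erule network_sym)

lemma network_sub: "poa_ratios network_game w1 w2 \<subseteq> poa_ratios valid_game w1 w2"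
  unfolding poa_ratios_def network_game_def by blast

lemma ratio_le_ord:
  assumes "x \<in> poa_ratios valid_game w1 w2" "0 \<le> w2" "w2 \<le> w1" "0 < w1"
  shows "x \<le> 1 + 2 / sqrt 3"
proof -
  obtain R \<alpha> \<beta> A1 A2 S1 S2 where x: "x = social_cost \<alpha> \<beta> w1 w2 S1 S2 / opt_cost A1 A2 \<alpha> \<beta> w1 w2"
    and c: "valid_game R \<alpha> \<beta> A1 A2" "0 < opt_cost A1 A2 \<alpha> \<beta> w1 w2" "is_NE A1 A2 \<alpha> \<beta> w1 w2 S1 S2"
    using assms(1) unfolding poa_ratios_def by blast
  show ?thesis unfolding x by (rule ratio_le[OF c(1) c(3) assms(2-4) c(2)])
qed

lemma ratio_le_all:
  assumes "x \<in> poa_ratios valid_game w1 w2" "0 \<le> w1" "0 \<le> w2" "0 < w1 + w2"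
  shows "x \<le> 1 + 2 / sqrt 3"
proof (cases "w2 \<le> w1")
  case True
  then show ?thesis using assms by (intro ratio_le_ord[of x w1 w2]) auto
next
  case False
  then have "x \<in> poa_ratios valid_game w2 w1" using assms ratios_swap_valid by blast
  then show ?thesis using assms False by (intro ratio_le_ord[of x w2 w1]) auto
qed

lemma walk_cut:
  assumes "is_walk src dst v t es" "v \<in> K" "t \<notin> K" "set es \<subseteq> E"
    "\<forall>e\<in>E. src e \<in> K \<longrightarrow> e \<notin> B \<longrightarrow> dst e \<in> K"
  shows "\<exists>e\<in>set es. e \<in> B"
  using assms
proof (induction es arbitrary: v)
  case Nil then show ?case by auto
next
  case (Cons e es)
  then show ?case by (cases "e \<in> B") auto
qed

lemma walk_forced:
  assumes "is_walk src dst v t es" "e \<in> set es" "dst e = u" "u \<noteq> t" "set es \<subseteq> E"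
    "\<forall>e'\<in>E. src e' = u \<longrightarrow> e' = f"
  shows "f \<in> set es"
  using assms
proof (induction es arbitrary: v)
  case Nil then show ?case by auto
next
  case (Cons e0 es)
  show ?case
  proof (cases "e0 = e")
    case True
    then have w: "is_walk src dst u t es" using Cons.prems by auto
    then obtain e1 es' where "es = e1 # es'" using Cons.prems(4) by (cases es) auto
    then show ?thesis using w Cons.prems by auto
  next
    case False
    then show ?thesis using Cons by auto
  qed
qed

definition srcG :: "nat \<Rightarrow> nat" where "srcG e = [0,1,2,3,4,0,6,7,8,4,2,8,7] ! e"
definition dstG :: "nat \<Rightarrow> nat" where "dstG e = [1,2,3,4,5,6,7,5,3,1,9,6,9] ! e"
definition RG :: "nat set" where "RG = {0,1,2,3,4,5,6,7,8,9,10,11,12}"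
definition alG :: "real \<Rightarrow> real \<Rightarrow> nat \<Rightarrow> real" where
  "alG t w e = (if e = 9 then (t*t+t+1)*w else 0)"
definition beG :: "real \<Rightarrow> nat \<Rightarrow> real" where
  "beG t e = (if e = 1 then t else if e = 6 then t+1 else 0)"

lemma in_paths:
  "{5,6,7} \<in> path_arcsets RG srcG dstG 0 5"
  "{0,1,2,3,4} \<in> path_arcsets RG srcG dstG 0 5"
  "{8,3,9,1,10} \<in> path_arcsets RG srcG dstG 8 9"
  "{11,6,12} \<in> path_arcsets RG srcG dstG 8 9"
  unfolding path_arcsets_def
  apply (rule CollectI, rule exI[of _ "[5,6,7]"], simp add: RG_def srcG_def dstG_def)
  apply (rule CollectI, rule exI[of _ "[0,1,2,3,4]"], simp add: RG_def srcG_def dstG_def)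
  apply (rule CollectI, rule exI[of _ "[8,3,9,1,10]"], simp add: RG_def srcG_def dstG_def)
  apply (rule CollectI, rule exI[of _ "[11,6,12]"], simp add: RG_def srcG_def dstG_def)
  done

lemma paths1: assumes "P \<in> path_arcsets RG srcG dstG 0 5" shows "1 \<in> P \<or> 6 \<in> P"
proof -
  obtain es where a: "P = set es" "set es \<subseteq> RG" "is_walk srcG dstG 0 5 es"
    using assms unfolding path_arcsets_def by blast
  have "\<exists>e\<in>set es. e \<in> {1,6}"
    by (rule walk_cut[OF a(3), of "{0,1,6}" RG]) (use a in \<open>auto simp: RG_def srcG_def dstG_def\<close>)
  then show ?thesis using a by auto
qed

lemma paths2: assumes "P \<in> path_arcsets RG srcG dstG 8 9" shows "6 \<in> P \<or> (9 \<in> P \<and> 1 \<in> P)"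
proof -
  obtain es where a: "P = set es" "set es \<subseteq> RG" "is_walk srcG dstG 8 9 es"
    using assms unfolding path_arcsets_def by blast
  have "\<exists>e\<in>set es. e \<in> {6,9}"
    by (rule walk_cut[OF a(3), of "{8,3,6,4,5}" RG]) (use a in \<open>auto simp: RG_def srcG_def dstG_def\<close>)
  moreover have "1 \<in> set es" if "9 \<in> set es"
    by (rule walk_forced[OF a(3) that, of 1 RG]) (use a in \<open>auto simp: RG_def srcG_def dstG_def\<close>)
  ultimately show ?thesis using a by auto
qed

lemma pcost_mono_set:
  assumes "finite P" "Q \<subseteq> P" "\<And>r. r \<in> P \<Longrightarrow> 0 \<le> \<alpha> r + \<beta> r * load w1 w2 X Y r"
  shows "pcost \<alpha> \<beta> w1 w2 X Y Q \<le> pcost \<alpha> \<beta> w1 w2 X Y P"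
  unfolding pcost_def using assms by (intro sum_mono2) auto

lemma paths_fin: "P \<in> path_arcsets RG srcG dstG s t \<Longrightarrow> finite P \<and> P \<subseteq> RG"
  unfolding path_arcsets_def by auto

lemma example_NE:
  assumes t: "0 \<le> t" and w: "0 < w"
  shows "is_NE (path_arcsets RG srcG dstG 0 5) (path_arcsets RG srcG dstG 8 9) (alG t w) (beG t) (t*w) w
           {5,6,7} {8,3,9,1,10}"
proof -
  have nn: "0 \<le> alG t w r + beG t r * load (t*w) w X Y r" for r X Y
    using t w by (auto simp: alG_def beG_def load_def intro!: add_nonneg_nonneg mult_nonneg_nonneg)
  have c1: "cost1 (alG t w) (beG t) (t*w) w {5,6,7} {8,3,9,1,10} = (t+1)*(t*w)"
    by (simp add: cost1_def pcost_def alG_def beG_def load_def)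
  have c2: "cost2 (alG t w) (beG t) (t*w) w {5,6,7} {8,3,9,1,10} = (t*t+t+1)*w + t*w"
    by (simp add: cost2_def pcost_def alG_def beG_def load_def)
  have d1: "cost1 (alG t w) (beG t) (t*w) w {5,6,7} {8,3,9,1,10} \<le> cost1 (alG t w) (beG t) (t*w) w P {8,3,9,1,10}"
    if P: "P \<in> path_arcsets RG srcG dstG 0 5" for P
  proof -
    have fP: "finite P" using paths_fin[OF P] by simp
    from paths1[OF P] show ?thesis
    proof
      assume "1 \<in> P"
      then have "pcost (alG t w) (beG t) (t*w) w P {8,3,9,1,10} {1} \<le> pcost (alG t w) (beG t) (t*w) w P {8,3,9,1,10} P"
        using fP nn by (intro pcost_mono_set) auto
      then show ?thesis using \<open>1 \<in> P\<close> unfolding c1 by (simp add: cost1_def pcost_def alG_def beG_def load_def algebra_simps)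
    next
      assume "6 \<in> P"
      then have "pcost (alG t w) (beG t) (t*w) w P {8,3,9,1,10} {6} \<le> pcost (alG t w) (beG t) (t*w) w P {8,3,9,1,10} P"
        using fP nn by (intro pcost_mono_set) auto
      then show ?thesis using \<open>6 \<in> P\<close> unfolding c1 by (simp add: cost1_def pcost_def alG_def beG_def load_def algebra_simps)
    qed
  qed
  have d2: "cost2 (alG t w) (beG t) (t*w) w {5,6,7} {8,3,9,1,10} \<le> cost2 (alG t w) (beG t) (t*w) w {5,6,7} P"
    if P: "P \<in> path_arcsets RG srcG dstG 8 9" for P
  proof -
    have fP: "finite P" using paths_fin[OF P] by simp
    from paths2[OF P] show ?thesis
    proof
      assume "6 \<in> P"
      then have "pcost (alG t w) (beG t) (t*w) w {5,6,7} P {6} \<le> pcost (alG t w) (beG t) (t*w) w {5,6,7} P P"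
        using fP nn by (intro pcost_mono_set) auto
      then show ?thesis using \<open>6 \<in> P\<close> t w unfolding c2
        by (simp add: cost2_def pcost_def alG_def beG_def load_def algebra_simps)
    next
      assume a: "9 \<in> P \<and> 1 \<in> P"
      then have "pcost (alG t w) (beG t) (t*w) w {5,6,7} P {9,1} \<le> pcost (alG t w) (beG t) (t*w) w {5,6,7} P P"
        using fP nn by (intro pcost_mono_set) auto
      then show ?thesis using a unfolding c2 by (simp add: cost2_def pcost_def alG_def beG_def load_def algebra_simps)
    qed
  qed
  show ?thesis unfolding is_NE_def using in_paths d1 d2 by blast
qed

lemma example_ratio:
  assumes w: "0 < w"
  shows "1 + 2 / sqrt 3 \<in> poa_ratios network_game ((1 + sqrt 3)*w) w"
proof -
  define t where "t = 1 + sqrt 3"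
  have t0: "0 \<le> t" "0 < t" unfolding t_def by (simp_all add: add_pos_nonneg)
  let ?A1 = "path_arcsets RG srcG dstG 0 5" and ?A2 = "path_arcsets RG srcG dstG 8 9"
  have vg: "valid_game RG (alG t w) (beG t) ?A1 ?A2"
    unfolding valid_game_def using in_paths paths_fin t0 w
    by (auto simp: RG_def alG_def beG_def)
  have ng: "network_game RG (alG t w) (beG t) ?A1 ?A2"
    unfolding network_game_def using vg by blast
  have ne: "is_NE ?A1 ?A2 (alG t w) (beG t) (t*w) w {5,6,7} {8,3,9,1,10}"
    by (rule example_NE[OF t0(1) w])
  have scS: "social_cost (alG t w) (beG t) (t*w) w {5,6,7} {8,3,9,1,10} = (t+1)*(t*w) + ((t*t+t+1)*w + t*w)"
    by (simp add: social_cost_def cost1_def cost2_def pcost_def alG_def beG_def load_def)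
  have scO: "social_cost (alG t w) (beG t) (t*w) w {0,1,2,3,4} {11,6,12} = t*(t*w) + (t+1)*w"
    by (simp add: social_cost_def cost1_def cost2_def pcost_def alG_def beG_def load_def)
  have finA: "finite ?A1" "finite ?A2" using vg unfolding valid_game_def
    by (meson finite_Pow_iff finite_subset)+
  have optle: "opt_cost ?A1 ?A2 (alG t w) (beG t) (t*w) w \<le> t*(t*w) + (t+1)*w"
    unfolding opt_cost_def scO[symmetric] using finA in_paths
    by (intro Min_le) (auto intro!: image_eqI[of _ _ "({0,1,2,3,4},{11,6,12})"])
  obtain O1 O2 where o: "O1 \<in> ?A1" "O2 \<in> ?A2"
    and oe: "opt_cost ?A1 ?A2 (alG t w) (beG t) (t*w) w = social_cost (alG t w) (beG t) (t*w) w O1 O2"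
    using opt_attained[OF vg] by blast
  have t1: "1 \<le> t" unfolding t_def by simp
  have tw: "0 \<le> w" "w \<le> t*w" "0 < t * w" using w t0 t1 by (auto simp: mult_le_cancel_right1)
  have ub: "((t*w)*(t*w)+(t*w)*w+w*w) * social_cost (alG t w) (beG t) (t*w) w {5,6,7} {8,3,9,1,10}
     \<le> ((t*w+w)*(2*(t*w)+w)) * opt_cost ?A1 ?A2 (alG t w) (beG t) (t*w) w"
    using ub_main[OF vg ne o tw(1,2)] oe by simp
  have Sp: "0 < social_cost (alG t w) (beG t) (t*w) w {5,6,7} {8,3,9,1,10}"
    unfolding scS using t0 w by (intro add_pos_nonneg) auto
  have Dp: "0 < (t*w)*(t*w)+(t*w)*w+w*w" using w t0 by (intro add_nonneg_pos) auto
  have optp: "0 < opt_cost ?A1 ?A2 (alG t w) (beG t) (t*w) w"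
  proof (rule ccontr)
    assume "\<not> ?thesis"
    then have "((t*w+w)*(2*(t*w)+w)) * opt_cost ?A1 ?A2 (alG t w) (beG t) (t*w) w \<le> 0"
      using t0 w by (intro mult_nonneg_nonpos) auto
    moreover have "0 < ((t*w)*(t*w)+(t*w)*w+w*w) * social_cost (alG t w) (beG t) (t*w) w {5,6,7} {8,3,9,1,10}"
      using Dp Sp by simp
    ultimately show False using ub by linarith
  qed
  define r where "r = social_cost (alG t w) (beG t) (t*w) w {5,6,7} {8,3,9,1,10} / opt_cost ?A1 ?A2 (alG t w) (beG t) (t*w) w"
  have rin: "r \<in> poa_ratios network_game (t*w) w"
    unfolding poa_ratios_def r_def using ng optp ne by blast
  have rle: "r \<le> 1 + 2 / sqrt 3"
    unfolding r_def by (rule ratio_le[OF vg ne tw(1,2,3) optp])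
  have key: "(t+1)*(t*w) + ((t*t+t+1)*w + t*w) = (1 + 2 / sqrt 3) * (t*(t*w) + (t+1)*w)"
  proof -
    define s where "s = sqrt 3"
    have s2: "s * s = 3" unfolding s_def by simp
    have sp: "0 < s" unfolding s_def by simp
    have s2': "\<And>x. s * (s * x) = 3 * x" using s2 by (simp add: mult.assoc[symmetric])
    show ?thesis unfolding t_def s_def[symmetric]
      using sp s2 by (simp add: field_simps)
  qed
  have "1 + 2 / sqrt 3 \<le> r"
  proof -
    have "(1 + 2 / sqrt 3) * opt_cost ?A1 ?A2 (alG t w) (beG t) (t*w) w \<le> (1 + 2 / sqrt 3) * (t*(t*w) + (t+1)*w)"
      using optle by (intro mult_left_mono) (auto intro: add_nonneg_nonneg)
    also have "\<dots> = social_cost (alG t w) (beG t) (t*w) w {5,6,7} {8,3,9,1,10}"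
      using key scS by simp
    finally show ?thesis unfolding r_def using optp by (simp add: le_divide_eq)
  qed
  then have "r = 1 + 2 / sqrt 3" using rle by simp
  then show ?thesis using rin unfolding t_def by simp
qed

lemma fixed_in:
  assumes "0 \<le> w1" "0 \<le> w2" "w1 / w2 = 1 + sqrt 3 \<or> w2 / w1 = 1 + sqrt 3"
  shows "1 + 2 / sqrt 3 \<in> poa_ratios network_game w1 w2 \<and> 0 < w1 + w2"
  using assms(3)
proof
  assume h: "w1 / w2 = 1 + sqrt 3"
  have nz: "(1 + sqrt 3::real) \<noteq> 0" using real_sqrt_ge_zero[of 3] by linarith
  then have "w2 \<noteq> 0" using h by auto
  then have w2p: "0 < w2" using assms(2) by simp
  have "w1 = (1 + sqrt 3) * w2" using h \<open>w2 \<noteq> 0\<close> by (simp add: field_simps)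
  moreover have "0 < w1 + w2" using assms(1) w2p by linarith
  ultimately show ?thesis using example_ratio[OF w2p] by simp
next
  assume h: "w2 / w1 = 1 + sqrt 3"
  have nz: "(1 + sqrt 3::real) \<noteq> 0" using real_sqrt_ge_zero[of 3] by linarith
  then have "w1 \<noteq> 0" using h by auto
  then have w1p: "0 < w1" using assms(1) by simp
  have "w2 = (1 + sqrt 3) * w1" using h \<open>w1 \<noteq> 0\<close> by (simp add: field_simps)
  moreover have "0 < w1 + w2" using assms(2) w1p by linarith
  ultimately show ?thesis using example_ratio[OF w1p] ratios_swap_network[of w1 w2] by simp
qed

lemma union_max:
  assumes le: "\<And>x w1 w2. 0 \<le> w1 \<Longrightarrow> 0 \<le> w2 \<Longrightarrow> 0 < w1 + w2 \<Longrightarrow> x \<in> poa_ratios cls w1 w2 \<Longrightarrow> x \<le> m"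
    and "m \<in> poa_ratios cls v1 v2" "0 \<le> v1" "0 \<le> v2" "0 < v1 + v2"
  shows "Sup (\<Union>{poa_ratios cls w1 w2 |w1 w2. 0 \<le> w1 \<and> 0 \<le> w2 \<and> 0 < w1 + w2}) = m"
proof (rule cSup_eq_maximum)
  have "poa_ratios cls v1 v2 \<in> {poa_ratios cls w1 w2 |w1 w2. 0 \<le> w1 \<and> 0 \<le> w2 \<and> 0 < w1 + w2}"
    using assms(3-5) by blast
  then show "m \<in> \<Union>{poa_ratios cls w1 w2 |w1 w2. 0 \<le> w1 \<and> 0 \<le> w2 \<and> 0 < w1 + w2}"
    using assms(2) by (rule UnionI)
next
  fix x assume "x \<in> \<Union>{poa_ratios cls w1 w2 |w1 w2. 0 \<le> w1 \<and> 0 \<le> w2 \<and> 0 < w1 + w2}"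
  then obtain w1 w2 where "x \<in> poa_ratios cls w1 w2" "0 \<le> w1" "0 \<le> w2" "0 < w1 + w2" by blast
  then show "x \<le> m" using le by blast
qed

theorem corollary1:
  shows "poa_all valid_game = 1 + 2 / sqrt 3 \<and>
         poa_all network_game = 1 + 2 / sqrt 3 \<and>
         (\<forall>w1 w2. 0 \<le> w1 \<and> 0 \<le> w2 \<and> (w1 / w2 = 1 + sqrt 3 \<or> w2 / w1 = 1 + sqrt 3) \<longrightarrow>
            poa_fixed valid_game w1 w2 = 1 + 2 / sqrt 3 \<and>
            poa_fixed network_game w1 w2 = 1 + 2 / sqrt 3)"
proof (intro conjI allI impI)
  have ex: "1 + 2 / sqrt 3 \<in> poa_ratios network_game (1 + sqrt 3) 1"
    using example_ratio[of 1] by simp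
  have wok: "0 \<le> (1 + sqrt 3::real)" "0 \<le> (1::real)" "0 < (1 + sqrt 3::real) + 1" by (simp_all add: add_pos_nonneg)
  have exv: "1 + 2 / sqrt 3 \<in> poa_ratios valid_game (1 + sqrt 3) 1"
    using ex network_sub by blast
  show "poa_all valid_game = 1 + 2 / sqrt 3"
    unfolding poa_all_def
    by (rule union_max[OF _ exv wok]) (rule ratio_le_all; assumption)
  show "poa_all network_game = 1 + 2 / sqrt 3"
    unfolding poa_all_def
    by (rule union_max[OF _ ex wok]) (rule ratio_le_all[OF subsetD[OF network_sub]]; assumption)
  fix w1 w2 :: real
  assume a: "0 \<le> w1 \<and> 0 \<le> w2 \<and> (w1 / w2 = 1 + sqrt 3 \<or> w2 / w1 = 1 + sqrt 3)"
  then have fi: "1 + 2 / sqrt 3 \<in> poa_ratios network_game w1 w2" "0 < w1 + w2"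
    using fixed_in by blast+
  have a12: "0 \<le> w1" "0 \<le> w2" using a by auto
  show "poa_fixed valid_game w1 w2 = 1 + 2 / sqrt 3"
    unfolding poa_fixed_def
  proof (rule cSup_eq_maximum)
    show "1 + 2 / sqrt 3 \<in> poa_ratios valid_game w1 w2" using fi network_sub by blast
    show "\<And>x. x \<in> poa_ratios valid_game w1 w2 \<Longrightarrow> x \<le> 1 + 2 / sqrt 3"
      using ratio_le_all a12 fi(2) by blast
  qed
  show "poa_fixed network_game w1 w2 = 1 + 2 / sqrt 3"
    unfolding poa_fixed_def
  proof (rule cSup_eq_maximum)
    show "1 + 2 / sqrt 3 \<in> poa_ratios network_game w1 w2" using fi by blast
    fix x assume "x \<in> poa_ratios network_game w1 w2"
    then have "x \<in> poa_ratios valid_game w1 w2" using network_sub by blast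
    then show "x \<le> 1 + 2 / sqrt 3" using ratio_le_all a12 fi(2) by blast
  qed
qed
end
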